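(* Let $1\le M\le N$. There is a constant $c_M>0$ (depending only on $M$) such that the following holds for every complex $N\times M$ matrix $\mathbf{H}$ of full column rank. Let $d_{\mathbf{H}}$ be the minimum distance of the lattice $\{\mathbf{H}\mathbf{z}:\mathbf{z}\in\mathbb{Z}[i]^M\}$, let $\mathbf{B}=\mathbf{H}^{-\mathtt{H}}\mathbf{U}$ (with $\mathbf{U}$ unimodular) be an LLL-reduced basis of the lattice generated by $\mathbf{H}^{-\mathtt{H}}=\mathbf{H}(\mathbf{H}^{\mathtt{H}}\mathbf{H})^{-1}$, and let $\mathbf{y}=\mathbf{H}\mathbf{x}+\mathbf{w}$ with $\mathbf{x}\in\mathbb{Z}[i]^M$, $\mathbf{w}\in\mathbb{C}^N$. If $\|\mathbf{w}\|<c_M d_{\mathbf{H}}$, then the LLL-aided (type I) decoder correctly decodes, i.e. $\widehat{\mathbf{x}}=\mathbf{x}$.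
   Context: $(\cdot)^{\mathtt{H}}$ is the conjugate transpose; $\mathbb{Z}[i]$ is the ring of Gaussian integers; a unimodular matrix is a matrix with entries in $\mathbb{Z}[i]$ whose inverse also has entries in $\mathbb{Z}[i]$. The lattice generated by an $N\times M$ matrix $\mathbf{G}$ of full column rank is $\{\mathbf{G}\mathbf{z}:\mathbf{z}\in\mathbb{Z}[i]^M\}$; its minimum distance is the smallest norm of a nonzero lattice vector. A basis is LLL-reduced in the sense of the Lenstra–Lenstra–Lovász reduction (extended to complex lattices over $\mathbb{Z}[i]$): with Gram–Schmidt vectors $\mathbf{b}_k^*$ and coefficients $\mu_{k,j}=\langle\mathbf{b}_k,\mathbf{b}_j^*\rangle/\|\mathbf{b}_j^*\|^2$, one has $|\mathrm{Re}\,\mu_{k,j}|,|\mathrm{Im}\,\mu_{k,j}|\le 1/2$ for $j<k$ and $\|\mathbf{b}_k^*\|^2\ge(3/4-|\mu_{k,k-1}|^2)\|\mathbf{b}_{k-1}^*\|^2$. The LLL-aided (type I) decoder computes $\tilde{\mathbf{x}}$ as the closest point of $\mathbb{Z}[i]^M$ to $\mathbf{B}^{\mathtt{H}}\mathbf{y}$ and outputs $\widehat{\mathbf{x}}=\mathbf{U}^{-\mathtt{H}}\tilde{\mathbf{x}}$. *)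

theory Defs
  imports "Jordan_Normal_Form.Schur_Decomposition"
begin

definition gint :: "complex \<Rightarrow> bool" where
  "gint z \<longleftrightarrow> Re z \<in> \<int> \<and> Im z \<in> \<int>"

definition gint_vec :: "nat \<Rightarrow> complex vec \<Rightarrow> bool" where
  "gint_vec n v \<longleftrightarrow> v \<in> carrier_vec n \<and> (\<forall>i<n. gint (v $ i))"

definition gint_mat :: "complex mat \<Rightarrow> bool" where
  "gint_mat A \<longleftrightarrow> (\<forall>i<dim_row A. \<forall>j<dim_col A. gint (A $$ (i, j)))"

definition minv :: "complex mat \<Rightarrow> complex mat" where
  "minv A = (THE B. B \<in> carrier_mat (dim_row A) (dim_row A) \<and> inverts_mat A B \<and> inverts_mat B A)"

definition unimodular :: "nat \<Rightarrow> complex mat \<Rightarrow> bool" where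
  "unimodular m U \<longleftrightarrow> U \<in> carrier_mat m m \<and> gint_mat U \<and> invertible_mat U \<and> gint_mat (minv U)"

definition cinner :: "complex vec \<Rightarrow> complex vec \<Rightarrow> complex" where
  "cinner a b = (\<Sum>i<dim_vec a. a $ i * cnj (b $ i))"

definition sqnorm :: "complex vec \<Rightarrow> real" where
  "sqnorm v = (\<Sum>i<dim_vec v. (cmod (v $ i))\<^sup>2)"

definition vnorm :: "complex vec \<Rightarrow> real" where
  "vnorm v = sqrt (sqnorm v)"

fun gso :: "complex mat \<Rightarrow> nat \<Rightarrow> complex vec" where
  "gso B k = vec (dim_row B) (\<lambda>i. col B k $ i -
      (\<Sum>j<k. (cinner (col B k) (gso B j) / complex_of_real (sqnorm (gso B j))) * (gso B j $ i)))"

definition gs_mu :: "complex mat \<Rightarrow> nat \<Rightarrow> nat \<Rightarrow> complex" where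
  "gs_mu B k j = cinner (col B k) (gso B j) / complex_of_real (sqnorm (gso B j))"

definition LLL_reduced :: "complex mat \<Rightarrow> bool" where
  "LLL_reduced B \<longleftrightarrow>
     (\<forall>k<dim_col B. \<forall>j<k. \<bar>Re (gs_mu B k j)\<bar> \<le> 1/2 \<and> \<bar>Im (gs_mu B k j)\<bar> \<le> 1/2) \<and>
     (\<forall>k. 1 \<le> k \<and> k < dim_col B \<longrightarrow>
        sqnorm (gso B k) \<ge> (3/4 - (cmod (gs_mu B k (k - 1)))\<^sup>2) * sqnorm (gso B (k - 1)))"

definition full_col_rank :: "complex mat \<Rightarrow> bool" where
  "full_col_rank H \<longleftrightarrow> (\<forall>z \<in> carrier_vec (dim_col H). H *\<^sub>v z = 0\<^sub>v (dim_row H) \<longrightarrow> z = 0\<^sub>v (dim_col H))"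

definition min_dist :: "complex mat \<Rightarrow> real" where
  "min_dist H = Inf {vnorm (H *\<^sub>v z) | z. gint_vec (dim_col H) z \<and> z \<noteq> 0\<^sub>v (dim_col H)}"

text \<open>Type I LLL-aided decoding: xt is a closest point of Z[i]^M to B^H y.\<close>
definition closest_gint :: "nat \<Rightarrow> complex vec \<Rightarrow> complex vec \<Rightarrow> bool" where
  "closest_gint m t xt \<longleftrightarrow> gint_vec m xt \<and>
     (\<forall>z. gint_vec m z \<longrightarrow> vnorm (t - xt) \<le> vnorm (t - z))"

end

theory Submission
  imports Defs "HOL-Analysis.L2_Norm"
begin

lemma adj_dims[simp]: "dim_row (mat_adjoint A) = dim_col A" "dim_col (mat_adjoint A) = dim_row A"
  unfolding mat_adjoint_def by auto

lemma adj_carrier: "A \<in> carrier_mat n m \<Longrightarrow> mat_adjoint A \<in> carrier_mat m n"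
  by (rule carrier_matI) (simp_all only: adj_dims carrier_matD)

lemma adj_index[simp]: "i < dim_col A \<Longrightarrow> j < dim_row A \<Longrightarrow> mat_adjoint (A :: complex mat) $$ (i,j) = cnj (A $$ (j,i))"
  unfolding mat_adjoint_def by (simp add: mat_of_rows_index)

lemma adj_one[simp]: "mat_adjoint (1\<^sub>m n :: complex mat) = 1\<^sub>m n"
  by (rule eq_matI) simp_all

lemma adj_adj[simp]: "mat_adjoint (mat_adjoint (A :: complex mat)) = A"
  by (rule eq_matI) simp_all

lemma adj_mult: assumes "(A::complex mat) \<in> carrier_mat n m" "B \<in> carrier_mat m p"
  shows "mat_adjoint (A * B) = mat_adjoint B * mat_adjoint A"
proof (rule eq_matI)
  fix i j assume "i < dim_row (mat_adjoint B * mat_adjoint A)" "j < dim_col (mat_adjoint B * mat_adjoint A)"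
  then show "mat_adjoint (A * B) $$ (i, j) = (mat_adjoint B * mat_adjoint A) $$ (i, j)"
    using assms by (simp add: scalar_prod_def mult.commute)
qed (use assms in simp_all)



lemma adj_mult_vec: assumes "k < dim_col B" "dim_vec w = dim_row B"
  shows "(mat_adjoint (B::complex mat) *\<^sub>v w) $ k = cinner w (col B k)"
  using assms by (simp add: cinner_def scalar_prod_def mult.commute row_def atLeast0LessThan)

lemma cinner_conj: "dim_vec a = dim_vec b \<Longrightarrow> cinner a b = cnj (cinner b a)"
  unfolding cinner_def by (simp add: mult.commute)

lemma cinner_self: "cinner v v = complex_of_real (sqnorm v)"
  unfolding cinner_def sqnorm_def by (simp only: of_real_sum complex_norm_square)

lemma sqnorm_nonneg: "sqnorm v \<ge> 0"
  unfolding sqnorm_def by (intro sum_nonneg) simp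

lemma vnorm_nonneg: "vnorm v \<ge> 0"
  unfolding vnorm_def by (simp add: sqnorm_nonneg)

lemma sqnorm_zero: assumes "sqnorm v = 0" "i < dim_vec v" shows "v $ i = 0"
proof -
  have "(\<Sum>i<dim_vec v. (cmod (v $ i))\<^sup>2) = 0" using assms unfolding sqnorm_def by simp
  then have "(cmod (v $ i))\<^sup>2 = 0" using assms(2) by (subst (asm) sum_nonneg_eq_0_iff) auto
  then show ?thesis by simp
qed

lemma component_le: "i < dim_vec v \<Longrightarrow> cmod (v $ i) \<le> vnorm v"
proof -
  assume i: "i < dim_vec v"
  have "(cmod (v $ i))\<^sup>2 \<le> sqnorm v" unfolding sqnorm_def
    by (rule member_le_sum[where f = "\<lambda>i. (cmod (v $ i))\<^sup>2"]) (use i in auto)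
  then have "sqrt ((cmod (v $ i))\<^sup>2) \<le> vnorm v" unfolding vnorm_def by (rule real_sqrt_le_mono)
  then show ?thesis by simp
qed

lemma cauchy_schwarz: assumes "dim_vec a = dim_vec b"
  shows "cmod (cinner a b) \<le> vnorm a * vnorm b"
proof -
  let ?A = "{..<dim_vec a}"
  have "cmod (cinner a b) \<le> (\<Sum>i\<in>?A. cmod (a $ i * cnj (b $ i)))"
    unfolding cinner_def by (rule norm_sum)
  also have "\<dots> = (\<Sum>i\<in>?A. \<bar>cmod (a $ i)\<bar> * \<bar>cmod (b $ i)\<bar>)"
    by (simp add: norm_mult)
  also have "\<dots> \<le> L2_set (\<lambda>i. cmod (a $ i)) ?A * L2_set (\<lambda>i. cmod (b $ i)) ?A"
    by (rule L2_set_mult_ineq)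
  also have "\<dots> = vnorm a * vnorm b"
    unfolding L2_set_def vnorm_def sqnorm_def using assms by simp
  finally show ?thesis .
qed

declare gso.simps[simp del]

lemma gso_dim[simp]: "dim_vec (gso B k) = dim_row B"
  by (subst gso.simps) simp

lemma gso_index: "i < dim_row B \<Longrightarrow> gso B k $ i = col B k $ i - (\<Sum>j<k. gs_mu B k j * gso B j $ i)"
  by (subst gso.simps) (simp add: gs_mu_def)

lemma cinner_gso_left: assumes "dim_vec u = dim_row B"
  shows "cinner (gso B k) u = cinner (col B k) u - (\<Sum>j<k. gs_mu B k j * cinner (gso B j) u)"
proof -
  have "cinner (gso B k) u = (\<Sum>i<dim_row B. (col B k $ i - (\<Sum>j<k. gs_mu B k j * gso B j $ i)) * cnj (u $ i))"
    unfolding cinner_def gso_dim by (intro sum.cong refl) (simp add: gso_index[of _ B k])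
  also have "\<dots> = (\<Sum>i<dim_row B. col B k $ i * cnj (u $ i) - (\<Sum>j<k. gs_mu B k j * (gso B j $ i * cnj (u $ i))))"
    by (intro sum.cong refl) (simp only: left_diff_distrib sum_distrib_right mult.assoc)
  also have "\<dots> = (\<Sum>i<dim_row B. col B k $ i * cnj (u $ i)) - (\<Sum>i<dim_row B. \<Sum>j<k. gs_mu B k j * (gso B j $ i * cnj (u $ i)))"
    by (rule sum_subtractf)
  also have "(\<Sum>i<dim_row B. \<Sum>j<k. gs_mu B k j * (gso B j $ i * cnj (u $ i))) = (\<Sum>j<k. gs_mu B k j * cinner (gso B j) u)"
    unfolding cinner_def gso_dim by (simp only: sum.swap[of _ "{..<k}"] sum_distrib_left)
  finally show ?thesis unfolding cinner_def by (simp only: gso_dim index_col dim_col)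
qed

lemma cinner_col_gso: assumes "dim_vec u = dim_row B"
  shows "cinner (col B k) u = cinner (gso B k) u + (\<Sum>j<k. gs_mu B k j * cinner (gso B j) u)"
  using cinner_gso_left[OF assms, of k] by simp

lemma cinner_gso_ortho: "j < k \<Longrightarrow> cinner (gso B k) (gso B j) = 0"
proof (induction k arbitrary: j rule: less_induct)
  case (less k)
  have zero: "cinner (gso B l) (gso B j) = 0" if "l < k" "l \<noteq> j" "j < k" for l
  proof (cases "j < l")
    case True then show ?thesis using less.IH[OF \<open>l < k\<close>] by blast
  next
    case False
    then have "l < j" using that by simp
    then have "cinner (gso B j) (gso B l) = 0" using less.IH[OF \<open>j < k\<close>] by blast
    then show ?thesis by (subst cinner_conj) simp_all
  qed
  have "(\<Sum>l<k. gs_mu B k l * cinner (gso B l) (gso B j)) = (\<Sum>l<k. if l = j then gs_mu B k j * cinner (gso B j) (gso B j) else 0)"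
    by (intro sum.cong refl) (use zero less.prems in auto)
  also have "\<dots> = gs_mu B k j * cinner (gso B j) (gso B j)"
    using less.prems by (simp add: sum.delta)
  also have "\<dots> = cinner (col B k) (gso B j)"
  proof (cases "sqnorm (gso B j) = 0")
    case True
    then have "gso B j = 0\<^sub>v (dim_row B)"
      using sqnorm_zero[OF True] by (intro eq_vecI) simp_all
    then show ?thesis by (simp add: cinner_def)
  next
    case False
    then show ?thesis unfolding gs_mu_def cinner_self by simp
  qed
  finally show ?case using cinner_gso_left[of "gso B j" B k] by simp
qed

lemma cinner_mult_left: assumes B: "B \<in> carrier_mat N M" and c: "c \<in> carrier_vec M" and u: "dim_vec u = N"
  shows "cinner (B *\<^sub>v c) u = (\<Sum>k<M. c $ k * cinner (col B k) u)"
proof -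
  have "cinner (B *\<^sub>v c) u = (\<Sum>i<N. (\<Sum>k<M. c $ k * (B $$ (i,k) * cnj (u $ i))))"
    unfolding cinner_def using B c
  proof (intro sum.cong)
    fix i assume i: "i \<in> {..<N}"
    have "(B *\<^sub>v c) $ i = (\<Sum>k<M. B $$ (i,k) * c $ k)"
      using B c i by (simp add: scalar_prod_def atLeast0LessThan)
    then show "(B *\<^sub>v c) $ i * cnj (u $ i) = (\<Sum>k<M. c $ k * (B $$ (i,k) * cnj (u $ i)))"
      by (simp add: sum_distrib_right sum_distrib_left mult.commute mult.left_commute)
  qed simp
  also have "\<dots> = (\<Sum>k<M. c $ k * cinner (col B k) u)"
    unfolding cinner_def using B u by (simp add: sum.swap[of _ "{..<M}"] sum_distrib_left)
  finally show ?thesis .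
qed

lemma cinner_mult_right: assumes B: "B \<in> carrier_mat N M" and c: "c \<in> carrier_vec M" and u: "dim_vec u = N"
  shows "cinner u (B *\<^sub>v c) = (\<Sum>k<M. cnj (c $ k) * cinner u (col B k))"
proof -
  have "cinner u (B *\<^sub>v c) = cnj (cinner (B *\<^sub>v c) u)"
    using B u by (subst cinner_conj) simp_all
  also have "\<dots> = (\<Sum>k<M. cnj (c $ k) * cnj (cinner (col B k) u))"
    unfolding cinner_mult_left[OF B c u] by simp
  also have "\<dots> = (\<Sum>k<M. cnj (c $ k) * cinner u (col B k))"
    using B u by (intro sum.cong refl) (subst (2) cinner_conj, simp_all)
  finally show ?thesis .
qed

lemma dual_lemma:
  assumes B: "B \<in> carrier_mat N M" and M: "1 \<le> M" and c: "c \<in> carrier_vec M"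
    and dd: "\<forall>j<M. cinner (col B j) (B *\<^sub>v c) = (if j = M-1 then 1 else 0)"
  shows "sqnorm (B *\<^sub>v c) * sqnorm (gso B (M-1)) = 1"
proof -
  define d where "d = B *\<^sub>v c"
  define g where "g = gso B (M-1)"
  have dimd: "dim_vec d = N" using B unfolding d_def by simp
  have rowB: "dim_row B = N" using B by simp
  have dd': "cinner (col B j) d = (if j = M-1 then 1 else 0)" if "j < M" for j
    using dd that unfolding d_def by blast
  have gd: "j < M \<Longrightarrow> cinner (gso B j) d = (if j = M-1 then 1 else 0)" for j
  proof (induction j rule: less_induct)
    case (less j)
    have "(\<Sum>l<j. gs_mu B j l * cinner (gso B l) d) = 0"
    proof (intro sum.neutral ballI)
      fix l assume "l \<in> {..<j}"
      then have "l < j" by simp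
      then have "cinner (gso B l) d = 0" using less.IH[of l] less.prems by simp
      then show "gs_mu B j l * cinner (gso B l) d = 0" by simp
    qed
    then show ?case using cinner_gso_left[of d B j] dimd rowB dd'[OF less.prems] by simp
  qed
  have "cinner d d = (\<Sum>k<M. c $ k * cinner (col B k) d)"
    unfolding d_def using cinner_mult_left[OF B c] dimd d_def by simp
  also have "\<dots> = (\<Sum>k<M. if k = M-1 then c $ (M-1) else 0)"
    by (intro sum.cong refl) (simp add: dd')
  also have "\<dots> = c $ (M-1)" using M by (simp add: sum.delta)
  finally have dd_c: "cinner d d = c $ (M-1)" .
  have gj0: "cinner (gso B j) g = 0" if "j < M-1" for j
  proof -
    have "cinner g (gso B j) = 0" unfolding g_def using that by (rule cinner_gso_ortho)
    then show ?thesis by (subst cinner_conj) (simp_all add: g_def)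
  qed
  have gb: "cinner g (col B k) = (if k = M-1 then complex_of_real (sqnorm g) else 0)" if "k < M" for k
  proof -
    have eq: "cinner (col B k) g = cinner (gso B k) g + (\<Sum>j<k. gs_mu B k j * cinner (gso B j) g)"
      by (rule cinner_col_gso) (simp add: g_def)
    have s0: "(\<Sum>j<k. gs_mu B k j * cinner (gso B j) g) = 0"
      by (intro sum.neutral ballI) (use gj0 that in auto)
    have "cinner (col B k) g = (if k = M-1 then complex_of_real (sqnorm g) else 0)"
    proof (cases "k = M-1")
      case True then show ?thesis using eq s0 by (simp add: g_def cinner_self)
    next
      case False then have "k < M-1" using that by simp
      then show ?thesis using eq s0 gj0 by simp
    qed
    moreover have "cinner g (col B k) = cnj (cinner (col B k) g)"
      by (rule cinner_conj) (simp add: g_def)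
    ultimately show ?thesis by simp
  qed
  have "cinner g d = (\<Sum>k<M. cnj (c $ k) * cinner g (col B k))"
    unfolding d_def by (rule cinner_mult_right[OF B c]) (simp add: g_def rowB)
  also have "\<dots> = (\<Sum>k<M. if k = M-1 then cnj (c $ (M-1)) * complex_of_real (sqnorm g) else 0)"
    by (intro sum.cong refl) (simp add: gb)
  also have "\<dots> = cnj (c $ (M-1)) * complex_of_real (sqnorm g)" using M by (simp add: sum.delta)
  finally have "cnj (c $ (M-1)) * complex_of_real (sqnorm g) = 1"
    using gd[of "M-1"] M unfolding g_def by simp
  then have "complex_of_real (sqnorm d) * complex_of_real (sqnorm g) = 1"
    using dd_c unfolding cinner_self by (metis complex_cnj_complex_of_real)
  then have "complex_of_real (sqnorm d * sqnorm g) = 1" by simp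
  then show ?thesis unfolding d_def g_def by (metis of_real_eq_1_iff)
qed

lemma mu_sq: assumes "LLL_reduced B" "j < k" "k < dim_col B"
  shows "(cmod (gs_mu B k j))\<^sup>2 \<le> 1/2"
proof -
  have r: "\<bar>Re (gs_mu B k j)\<bar> \<le> 1/2" and i: "\<bar>Im (gs_mu B k j)\<bar> \<le> 1/2"
    using assms unfolding LLL_reduced_def by auto
  have "(Re (gs_mu B k j))\<^sup>2 \<le> (1/2)\<^sup>2" using power_mono[OF r abs_ge_zero, of 2] by simp
  moreover have "(Im (gs_mu B k j))\<^sup>2 \<le> (1/2)\<^sup>2" using power_mono[OF i abs_ge_zero, of 2] by simp
  ultimately show ?thesis unfolding cmod_power2 by (simp add: power_divide)
qed

lemma mu_le1: assumes "LLL_reduced B" "j < k" "k < dim_col B"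
  shows "cmod (gs_mu B k j) \<le> 1"
proof -
  have "(cmod (gs_mu B k j))\<^sup>2 \<le> 1\<^sup>2" using mu_sq[OF assms] by simp
  then show ?thesis by (rule power2_le_imp_le) simp
qed

lemma LLL_step: assumes "LLL_reduced B" "1 \<le> k" "k < dim_col B"
  shows "sqnorm (gso B (k-1)) \<le> 4 * sqnorm (gso B k)"
proof -
  have l: "sqnorm (gso B k) \<ge> (3/4 - (cmod (gs_mu B k (k - 1)))\<^sup>2) * sqnorm (gso B (k - 1))"
    using assms unfolding LLL_reduced_def by blast
  have "(cmod (gs_mu B k (k - 1)))\<^sup>2 \<le> 1/2" using mu_sq[OF assms(1) _ assms(3), of "k-1"] assms(2) by simp
  then have "(1/4) * sqnorm (gso B (k - 1)) \<le> (3/4 - (cmod (gs_mu B k (k - 1)))\<^sup>2) * sqnorm (gso B (k - 1))"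
    by (intro mult_right_mono) (simp_all add: sqnorm_nonneg)
  then show ?thesis using l by simp
qed

lemma LLL_chain: assumes "LLL_reduced B" "n < dim_col B"
  shows "sqnorm (gso B (dim_col B - 1 - n)) \<le> 4^n * sqnorm (gso B (dim_col B - 1))"
  using assms(2)
proof (induction n)
  case 0 then show ?case by simp
next
  case (Suc n)
  have "sqnorm (gso B (dim_col B - 1 - Suc n)) = sqnorm (gso B ((dim_col B - 1 - n) - 1))"
    by (simp add: diff_diff_add)
  also have "\<dots> \<le> 4 * sqnorm (gso B (dim_col B - 1 - n))"
    by (rule LLL_step[OF assms(1)]) (use Suc.prems in auto)
  also have "\<dots> \<le> 4 * (4^n * sqnorm (gso B (dim_col B - 1)))"
    using Suc by simp
  finally show ?case by simp
qed

lemma LLL_vnorm: assumes "LLL_reduced B" "j < dim_col B"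
  shows "vnorm (gso B j) \<le> 2^(dim_col B) * vnorm (gso B (dim_col B - 1))"
proof -
  let ?M = "dim_col B"
  have "sqnorm (gso B j) \<le> 4^(?M - 1 - j) * sqnorm (gso B (?M - 1))"
    using LLL_chain[OF assms(1), of "?M - 1 - j"] assms(2) by simp
  also have "\<dots> \<le> 4^?M * sqnorm (gso B (?M - 1))"
    by (intro mult_right_mono power_increasing) (simp_all add: sqnorm_nonneg)
  finally have "sqrt (sqnorm (gso B j)) \<le> sqrt (4^?M * sqnorm (gso B (?M - 1)))"
    by (rule real_sqrt_le_mono)
  also have "sqrt (4^?M * sqnorm (gso B (?M - 1))) = 2^?M * vnorm (gso B (?M - 1))"
  proof -
    have "(4::real)^?M = (2^?M)\<^sup>2" by (simp add: power2_eq_square power_mult_distrib[symmetric])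
    then have "sqrt ((4::real)^?M) = 2^?M" by simp
    then show ?thesis unfolding vnorm_def real_sqrt_mult by simp
  qed
  finally show ?thesis unfolding vnorm_def .
qed

lemma col_bound: assumes L: "LLL_reduced B" and k: "k < dim_col B" and w: "dim_vec w = dim_row B"
  shows "cmod (cinner w (col B k)) \<le> (\<Sum>j<dim_col B. cmod (cinner (gso B j) w))"
proof -
  have "cmod (cinner w (col B k)) = cmod (cinner (col B k) w)"
    using w by (subst cinner_conj) simp_all
  also have "cinner (col B k) w = cinner (gso B k) w + (\<Sum>j<k. gs_mu B k j * cinner (gso B j) w)"
    using w by (rule cinner_col_gso)
  also have "cmod \<dots> \<le> cmod (cinner (gso B k) w) + cmod (\<Sum>j<k. gs_mu B k j * cinner (gso B j) w)"
    by (rule norm_triangle_ineq)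
  also have "cmod (\<Sum>j<k. gs_mu B k j * cinner (gso B j) w) \<le> (\<Sum>j<k. cmod (gs_mu B k j * cinner (gso B j) w))"
    by (rule norm_sum)
  also have "\<dots> \<le> (\<Sum>j<k. cmod (cinner (gso B j) w))"
  proof (intro sum_mono)
    fix j assume "j \<in> {..<k}"
    then have "cmod (gs_mu B k j) \<le> 1" using mu_le1[OF L _ k] by simp
    then show "cmod (gs_mu B k j * cinner (gso B j) w) \<le> cmod (cinner (gso B j) w)"
      unfolding norm_mult by (simp add: mult_left_le_one_le)
  qed
  also have "cmod (cinner (gso B k) w) + (\<Sum>j<k. cmod (cinner (gso B j) w)) = (\<Sum>j<Suc k. cmod (cinner (gso B j) w))"
    by simp
  also have "\<dots> \<le> (\<Sum>j<dim_col B. cmod (cinner (gso B j) w))"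
    by (intro sum_mono2) (use k in auto)
  finally show ?thesis by simp
qed

definition gint_set :: "complex set" where "gint_set = {z. gint z}"

lemma gint_0[simp]: "gint 0" and gint_1[simp]: "gint 1" unfolding gint_def by auto
lemma gint_add: "gint a \<Longrightarrow> gint b \<Longrightarrow> gint (a + b)" unfolding gint_def by auto
lemma gint_diff: "gint a \<Longrightarrow> gint b \<Longrightarrow> gint (a - b)" unfolding gint_def by auto
lemma gint_mult: "gint a \<Longrightarrow> gint b \<Longrightarrow> gint (a * b)" unfolding gint_def by auto
lemma gint_cnj: "gint a \<Longrightarrow> gint (cnj a)" unfolding gint_def by auto
lemma gint_sum: "(\<And>i. i \<in> A \<Longrightarrow> gint (f i)) \<Longrightarrow> gint (sum f A)"
  unfolding gint_def by (auto simp: Re_sum Im_sum intro!: Ints_sum)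

lemma gint_small: assumes "gint z" "cmod z < 1" shows "z = 0"
proof -
  have r: "\<bar>Re z\<bar> < 1" using abs_Re_le_cmod[of z] assms(2) by linarith
  have i: "\<bar>Im z\<bar> < 1" using abs_Im_le_cmod[of z] assms(2) by linarith
  obtain a where a: "Re z = of_int a" using assms(1) unfolding gint_def by (auto elim: Ints_cases)
  obtain b where b: "Im z = of_int b" using assms(1) unfolding gint_def by (auto elim: Ints_cases)
  have "a = 0" using r a by simp
  moreover have "b = 0" using i b by simp
  ultimately show ?thesis using a b by (simp add: complex_eq_iff)
qed

lemma gint_mat_vec: assumes "gint_mat A" "A \<in> carrier_mat m n" "gint_vec n v"
  shows "gint_vec m (A *\<^sub>v v)"
  unfolding gint_vec_def
proof (intro conjI allI impI)
  show "A *\<^sub>v v \<in> carrier_vec m" using assms(2) by (metis carrier_matD(1) carrier_vec_dim_vec dim_mult_mat_vec)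
  fix i assume i: "i < m"
  have "(A *\<^sub>v v) $ i = (\<Sum>j\<in>{0..<n}. A $$ (i,j) * v $ j)"
    using assms i unfolding gint_vec_def by (auto simp: scalar_prod_def intro!: sum.cong)
  moreover have "gint (\<Sum>j\<in>{0..<n}. A $$ (i,j) * v $ j)"
    using assms i unfolding gint_vec_def gint_mat_def by (intro gint_sum gint_mult) auto
  ultimately show "gint ((A *\<^sub>v v) $ i)" by simp
qed

lemma gint_mat_adj: "gint_mat A \<Longrightarrow> gint_mat (mat_adjoint A)"
  unfolding gint_mat_def by (auto intro: gint_cnj)

lemma minv_props: assumes "invertible_mat (A :: complex mat)" "A \<in> carrier_mat n n"
  shows "minv A \<in> carrier_mat n n" "A * minv A = 1\<^sub>m n" "minv A * A = 1\<^sub>m n"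
proof -
  obtain B where AB: "A * B = 1\<^sub>m n" and BA: "B * A = 1\<^sub>m (dim_row B)"
    using assms unfolding invertible_mat_def inverts_mat_def by auto
  have Bc: "B \<in> carrier_mat n n"
  proof -
    have "dim_col B = n" using AB by (metis index_mult_mat(3) index_one_mat(3))
    moreover have "dim_row B = n" using BA assms(2) by (metis index_mult_mat(3) index_one_mat(3) carrier_matD(2))
    ultimately show ?thesis by auto
  qed
  have BA': "B * A = 1\<^sub>m n" using BA Bc by simp
  have P: "B \<in> carrier_mat (dim_row A) (dim_row A) \<and> inverts_mat A B \<and> inverts_mat B A"
    using Bc AB BA assms(2) unfolding inverts_mat_def by simp
  have U: "C = B" if "C \<in> carrier_mat (dim_row A) (dim_row A) \<and> inverts_mat A C \<and> inverts_mat C A" for C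
  proof -
    have C: "C \<in> carrier_mat n n" "C * A = 1\<^sub>m n" "A * C = 1\<^sub>m n"
      using that assms(2) unfolding inverts_mat_def by auto
    have "C = C * (A * B)" using C AB by simp
    also have "\<dots> = (C * A) * B" using assoc_mult_mat[OF C(1) assms(2) Bc] by simp
    also have "\<dots> = B" using C Bc by simp
    finally show ?thesis .
  qed
  have "minv A = B" unfolding minv_def by (rule the_equality) (use P U in blast)+
  then show "minv A \<in> carrier_mat n n" "A * minv A = 1\<^sub>m n" "minv A * A = 1\<^sub>m n"
    using Bc AB BA' by auto
qed

lemma sqnorm_zero_vec: assumes "sqnorm v = 0" shows "v = 0\<^sub>v (dim_vec v)"
  using sqnorm_zero[OF assms] by (intro eq_vecI) simp_all

lemma gram_invertible: assumes H: "(H :: complex mat) \<in> carrier_mat N M" and fr: "full_col_rank H"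
  shows "invertible_mat (mat_adjoint H * H)"
proof -
  let ?A = "mat_adjoint H * H"
  have adjH: "mat_adjoint H \<in> carrier_mat M N" using H by (rule adj_carrier)
  have A: "?A \<in> carrier_mat M M" using adjH H by simp
  have "det ?A \<noteq> 0"
  proof
    assume "det ?A = 0"
    then obtain v where v: "v \<in> carrier_vec M" "v \<noteq> 0\<^sub>v M" "?A *\<^sub>v v = 0\<^sub>v M"
      using det_0_iff_vec_prod_zero[OF A] by blast
    define u where "u = H *\<^sub>v v"
    have du: "dim_vec u = N" using H unfolding u_def by simp
    have Au: "mat_adjoint H *\<^sub>v u = 0\<^sub>v M"
      using v(3) assoc_mult_mat_vec[OF adjH H v(1)] unfolding u_def by simp
    have "cinner u u = (\<Sum>k<M. cnj (v $ k) * cinner u (col H k))"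
      unfolding u_def by (rule cinner_mult_right[OF H v(1)]) (use H in simp)
    also have "\<dots> = 0"
    proof (intro sum.neutral ballI)
      fix k assume "k \<in> {..<M}"
      then have "cinner u (col H k) = (mat_adjoint H *\<^sub>v u) $ k"
        using H du by (subst adj_mult_vec) simp_all
      then show "cnj (v $ k) * cinner u (col H k) = 0" using Au \<open>k \<in> {..<M}\<close> by simp
    qed
    finally have "sqnorm u = 0" unfolding cinner_self by simp
    then have "u = 0\<^sub>v N" using sqnorm_zero_vec du by metis
    then have "v = 0\<^sub>v M" using fr v(1) H unfolding full_col_rank_def u_def by auto
    then show False using v(2) by simp
  qed
  then have "?A \<in> Units (ring_mat TYPE(complex) M undefined)"
    by (rule det_non_zero_imp_unit[OF A])
  then obtain B where B: "B \<in> carrier_mat M M" "B * ?A = 1\<^sub>m M" "?A * B = 1\<^sub>m M"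
    unfolding Units_def ring_mat_def by auto
  show ?thesis unfolding invertible_mat_def inverts_mat_def
    using A B by (intro conjI exI[of _ B]) (auto simp: square_mat.simps)
qed

theorem lemma3:
  fixes M :: nat
  assumes "1 \<le> M"
  shows "\<exists>c>0. \<forall>N (H :: complex mat) U x w xt.
    M \<le> N \<and> H \<in> carrier_mat N M \<and> full_col_rank H \<and>
    unimodular M U \<and> LLL_reduced (H * minv (mat_adjoint H * H) * U) \<and>
    gint_vec M x \<and> w \<in> carrier_vec N \<and> vnorm w < c * min_dist H \<and>
    closest_gint M (mat_adjoint (H * minv (mat_adjoint H * H) * U) *\<^sub>v (H *\<^sub>v x + w)) xt
    \<longrightarrow> mat_adjoint (minv U) *\<^sub>v xt = x"
proof -
  define c :: real where "c = 1 / (4 * real M * real M * 2^M)"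
  have cpos: "c > 0" using assms by (simp add: c_def)
  show ?thesis
  proof (intro exI[of _ c] conjI cpos allI impI)
    fix N H U x w xt
    assume hyp: "M \<le> N \<and> H \<in> carrier_mat N M \<and> full_col_rank H \<and>
      unimodular M U \<and> LLL_reduced (H * minv (mat_adjoint H * H) * U) \<and>
      gint_vec M x \<and> w \<in> carrier_vec N \<and> vnorm w < c * min_dist H \<and>
      closest_gint M (mat_adjoint (H * minv (mat_adjoint H * H) * U) *\<^sub>v (H *\<^sub>v x + w)) xt"
    define A where "A = mat_adjoint H * H"
    define Ai where "Ai = minv A"
    define B where "B = H * Ai * U"
    define Ui where "Ui = minv U"
    have H: "H \<in> carrier_mat N M" and fr: "full_col_rank H" and uni: "unimodular M U"
      and LLL: "LLL_reduced B" and gx: "gint_vec M x" and wc: "w \<in> carrier_vec N"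
      and wsmall: "vnorm w < c * min_dist H"
      and cl: "closest_gint M (mat_adjoint B *\<^sub>v (H *\<^sub>v x + w)) xt"
      using hyp unfolding B_def Ai_def A_def by auto
    have adjH: "mat_adjoint H \<in> carrier_mat M N" using H by (rule adj_carrier)
    have Ac: "A \<in> carrier_mat M M" unfolding A_def using adjH H by simp
    have invA: "invertible_mat A" unfolding A_def using H fr by (rule gram_invertible)
    have Aic: "Ai \<in> carrier_mat M M" and AAi: "A * Ai = 1\<^sub>m M" and AiA: "Ai * A = 1\<^sub>m M"
      using minv_props[OF invA Ac] unfolding Ai_def by auto
    have Uc: "U \<in> carrier_mat M M" and gU: "gint_mat U" and invU: "invertible_mat U" and gUi: "gint_mat Ui"
      using uni unfolding unimodular_def Ui_def by auto
    have Uic: "Ui \<in> carrier_mat M M" and UUi: "U * Ui = 1\<^sub>m M" and UiU: "Ui * U = 1\<^sub>m M"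
      using minv_props[OF invU Uc] unfolding Ui_def by auto
    have HAi: "H * Ai \<in> carrier_mat N M" using H Aic by simp
    have Bc: "B \<in> carrier_mat N M" unfolding B_def using HAi Uc by simp
    have adjB: "mat_adjoint B \<in> carrier_mat M N" using Bc by (rule adj_carrier)
    have adjU: "mat_adjoint U \<in> carrier_mat M M" using Uc by (rule adj_carrier)
    have adjUi: "mat_adjoint Ui \<in> carrier_mat M M" using Uic by (rule adj_carrier)
    have adjAi: "mat_adjoint Ai \<in> carrier_mat M M" using Aic by (rule adj_carrier)
    have adjB_eq: "mat_adjoint B = mat_adjoint U * (mat_adjoint Ai * mat_adjoint H)"
      unfolding B_def using adj_mult[OF HAi Uc] adj_mult[OF H Aic] by simp
    have adjA: "mat_adjoint A = A" unfolding A_def using adj_mult[OF adjH H] by simp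
    have adjAiA: "mat_adjoint Ai * A = 1\<^sub>m M"
      using adj_mult[OF Ac Aic] AAi adjA by simp
    have BH: "mat_adjoint B * H = mat_adjoint U"
    proof -
      have "mat_adjoint B * H = mat_adjoint U * (mat_adjoint Ai * mat_adjoint H) * H" by (simp add: adjB_eq)
      also have "\<dots> = mat_adjoint U * ((mat_adjoint Ai * mat_adjoint H) * H)"
        by (rule assoc_mult_mat[OF adjU _ H]) (use adjAi adjH in simp)
      also have "(mat_adjoint Ai * mat_adjoint H) * H = mat_adjoint Ai * A"
        unfolding A_def by (rule assoc_mult_mat[OF adjAi adjH H])
      finally show ?thesis using adjAiA right_mult_one_mat[OF adjU] by simp
    qed
    define v where "v = mat_adjoint B *\<^sub>v w"
    define p where "p = mat_adjoint U *\<^sub>v x"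
    have xc: "x \<in> carrier_vec M" using gx unfolding gint_vec_def by simp
    have Hx: "H *\<^sub>v x \<in> carrier_vec N" using H xc by simp
    have vc: "v \<in> carrier_vec M" unfolding v_def using adjB wc by simp
    have pc: "p \<in> carrier_vec M" unfolding p_def using adjU xc by simp
    have teq: "mat_adjoint B *\<^sub>v (H *\<^sub>v x + w) = p + v"
    proof -
      have "mat_adjoint B *\<^sub>v (H *\<^sub>v x + w) = mat_adjoint B *\<^sub>v (H *\<^sub>v x) + mat_adjoint B *\<^sub>v w"
        by (rule mult_add_distrib_mat_vec[OF adjB Hx wc])
      also have "mat_adjoint B *\<^sub>v (H *\<^sub>v x) = (mat_adjoint B * H) *\<^sub>v x"
        by (rule assoc_mult_mat_vec[OF adjB H xc, symmetric])
      finally show ?thesis unfolding BH p_def v_def .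
    qed
    have vk: "v $ k = cinner w (col B k)" if "k < M" for k
      unfolding v_def using that Bc wc by (subst adj_mult_vec) simp_all
    define e :: "complex vec" where "e = unit_vec M (M-1)"
    define z where "z = mat_adjoint Ui *\<^sub>v e"
    define d where "d = H *\<^sub>v z"
    define c0 where "c0 = (Ui * A) *\<^sub>v z"
    have ec: "e \<in> carrier_vec M" unfolding e_def by simp
    have zc: "z \<in> carrier_vec M" unfolding z_def using adjUi ec by simp
    have UiA: "Ui * A \<in> carrier_mat M M" using Uic Ac by simp
    have c0c: "c0 \<in> carrier_vec M" unfolding c0_def using UiA zc by simp
    have BUiA: "B * (Ui * A) = H"
    proof -
      have "B * (Ui * A) = (H * Ai) * (U * (Ui * A))" unfolding B_def
        by (rule assoc_mult_mat[OF HAi Uc UiA])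
      also have "U * (Ui * A) = (U * Ui) * A" by (rule assoc_mult_mat[OF Uc Uic Ac, symmetric])
      also have "(U * Ui) * A = A" using UUi Ac by simp
      also have "(H * Ai) * A = H * (Ai * A)" by (rule assoc_mult_mat[OF H Aic Ac])
      also have "H * (Ai * A) = H" using AiA right_mult_one_mat[OF H] by simp
      finally show ?thesis .
    qed
    have Bc0: "B *\<^sub>v c0 = d"
      unfolding c0_def d_def using assoc_mult_mat_vec[OF Bc UiA zc] BUiA by simp
    have adjUz: "mat_adjoint U *\<^sub>v z = e"
    proof -
      have "mat_adjoint U *\<^sub>v z = (mat_adjoint U * mat_adjoint Ui) *\<^sub>v e"
        unfolding z_def by (rule assoc_mult_mat_vec[OF adjU adjUi ec, symmetric])
      also have "mat_adjoint U * mat_adjoint Ui = 1\<^sub>m M"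
        using adj_mult[OF Uic Uc] UiU by simp
      finally show ?thesis using ec by simp
    qed
    have adjBd: "mat_adjoint B *\<^sub>v d = e"
      unfolding d_def using assoc_mult_mat_vec[OF adjB H zc] BH adjUz by simp
    have dd: "\<forall>j<M. cinner (col B j) (B *\<^sub>v c0) = (if j = M-1 then 1 else 0)"
    proof (intro allI impI)
      fix j assume j: "j < M"
      have dimd: "dim_vec d = N" unfolding d_def using H by simp
      have "cinner (col B j) d = cnj (cinner d (col B j))"
        using Bc dimd by (subst cinner_conj) simp_all
      also have "cinner d (col B j) = (mat_adjoint B *\<^sub>v d) $ j"
        using Bc dimd j by (subst adj_mult_vec) simp_all
      finally show "cinner (col B j) (B *\<^sub>v c0) = (if j = M-1 then 1 else 0)"
        using j adjBd Bc0 unfolding e_def by simp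
    qed
    have sq1: "sqnorm d * sqnorm (gso B (M-1)) = 1"
      using dual_lemma[OF Bc assms c0c dd] Bc0 by simp
    define g where "g = gso B (M-1)"
    have vn1: "vnorm d * vnorm g = 1"
      using sq1 unfolding vnorm_def g_def by (simp add: real_sqrt_mult[symmetric])
    have gz: "gint_vec M z" unfolding z_def
    proof (rule gint_mat_vec[OF gint_mat_adj[OF gUi] adjUi])
      show "gint_vec M e" unfolding gint_vec_def e_def by (auto simp: unit_vec_def)
    qed
    have znz: "z \<noteq> 0\<^sub>v M"
    proof
      assume "z = 0\<^sub>v M"
      moreover have "mat_adjoint U *\<^sub>v 0\<^sub>v M = 0\<^sub>v M"
        using adjU by (intro eq_vecI) (auto simp: scalar_prod_def)
      ultimately have "e = 0\<^sub>v M" using adjUz by simp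
      moreover have "e $ (M-1) = 1" unfolding e_def using assms by simp
      ultimately show False using assms by simp
    qed
    have md: "min_dist H \<le> vnorm d"
      unfolding min_dist_def
    proof (rule cInf_lower)
      show "vnorm d \<in> {vnorm (H *\<^sub>v z) |z. gint_vec (dim_col H) z \<and> z \<noteq> 0\<^sub>v (dim_col H)}"
        unfolding d_def using gz znz H by auto
      show "bdd_below {vnorm (H *\<^sub>v z) |z. gint_vec (dim_col H) z \<and> z \<noteq> 0\<^sub>v (dim_col H)}"
        by (rule bdd_belowI[of _ 0]) (auto simp: vnorm_nonneg)
    qed
    have mdg: "min_dist H * vnorm g \<le> 1"
      using mult_right_mono[OF md vnorm_nonneg[of g]] vn1 by simp
    have dimB: "dim_col B = M" "dim_row B = N" using Bc by auto
    have wg: "vnorm w * vnorm g \<le> c"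
    proof -
      have "vnorm w * vnorm g \<le> (c * min_dist H) * vnorm g"
        using wsmall by (intro mult_right_mono) (simp_all add: vnorm_nonneg)
      also have "\<dots> = c * (min_dist H * vnorm g)" by simp
      also have "\<dots> \<le> c * 1" using mdg cpos by (intro mult_left_mono) simp_all
      finally show ?thesis by simp
    qed
    have gj: "vnorm (gso B j) \<le> 2^M * vnorm g" if "j < M" for j
      using LLL_vnorm[OF LLL, of j] that dimB unfolding g_def by simp
    have wdim: "dim_vec w = N" using wc by simp
    have vbound: "cmod (v $ k) \<le> 1 / (4 * real M)" if k: "k < M" for k
    proof -
      have "cmod (v $ k) \<le> (\<Sum>j<M. cmod (cinner (gso B j) w))"
        using col_bound[OF LLL, of k w] k dimB wdim vk[OF k] by simp
      also have "\<dots> \<le> (\<Sum>j<M. 2^M * (vnorm w * vnorm g))"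
      proof (intro sum_mono)
        fix j assume "j \<in> {..<M}"
        then have j: "j < M" by simp
        have "cmod (cinner (gso B j) w) \<le> vnorm (gso B j) * vnorm w"
          using wdim dimB by (intro cauchy_schwarz) simp
        also have "\<dots> \<le> (2^M * vnorm g) * vnorm w"
          using gj[OF j] by (intro mult_right_mono) (simp_all add: vnorm_nonneg)
        finally show "cmod (cinner (gso B j) w) \<le> 2^M * (vnorm w * vnorm g)" by (simp add: mult_ac)
      qed
      also have "\<dots> = real M * 2^M * (vnorm w * vnorm g)" by simp
      also have "\<dots> \<le> real M * 2^M * c" using wg by (intro mult_left_mono) simp_all
      also have "\<dots> = 1 / (4 * real M)" unfolding c_def using assms by (simp add: field_simps)
      finally show ?thesis .
    qed
    have M4: "1 / (4 * real M) \<le> 1/4" using assms by (simp add: field_simps)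
    have sqv: "sqnorm v \<le> 1/16"
    proof -
      have "sqnorm v = (\<Sum>k<M. (cmod (v $ k))\<^sup>2)" unfolding sqnorm_def using vc by simp
      also have "\<dots> \<le> (\<Sum>k<M. (1 / (4 * real M))\<^sup>2)"
      proof (intro sum_mono)
        fix k assume "k \<in> {..<M}"
        then have "cmod (v $ k) \<le> 1 / (4 * real M)" using vbound by simp
        then show "(cmod (v $ k))\<^sup>2 \<le> (1 / (4 * real M))\<^sup>2" by (intro power_mono) simp_all
      qed
      also have "\<dots> = 1 / (16 * real M)" using assms by (simp add: power2_eq_square field_simps)
      also have "\<dots> \<le> 1/16" using assms by (simp add: field_simps)
      finally show ?thesis .
    qed
    have vnv: "vnorm v \<le> 1/4"
    proof -
      have "vnorm v \<le> sqrt (1/16)" unfolding vnorm_def using sqv by (rule real_sqrt_le_mono)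
      also have "sqrt (1/16) = (1/4::real)" by (simp add: real_sqrt_divide)
      finally show ?thesis .
    qed
    have gxt: "gint_vec M xt" and clo: "\<And>z. gint_vec M z \<Longrightarrow> vnorm ((p + v) - xt) \<le> vnorm ((p + v) - z)"
      using cl unfolding closest_gint_def teq by auto
    have gp: "gint_vec M p" unfolding p_def by (rule gint_mat_vec[OF gint_mat_adj[OF gU] adjU gx])
    have xtc: "xt \<in> carrier_vec M" using gxt unfolding gint_vec_def by simp
    have pv: "(p + v) - p = v" using pc vc by (intro eq_vecI) auto
    have close: "vnorm ((p + v) - xt) \<le> 1/4" using clo[OF gp] pv vnv by simp
    have xtp: "xt = p"
    proof (intro eq_vecI)
      show "dim_vec xt = dim_vec p" using xtc pc by simp
      fix k assume "k < dim_vec p"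
      then have k: "k < M" using pc by simp
      have g: "gint (xt $ k - p $ k)" using gxt gp k unfolding gint_vec_def by (intro gint_diff) auto
      have eq: "xt $ k - p $ k = v $ k - ((p + v) - xt) $ k" using k pc vc xtc by simp
      have "cmod (xt $ k - p $ k) \<le> cmod (v $ k) + cmod (((p + v) - xt) $ k)"
        unfolding eq by (rule norm_triangle_ineq4)
      also have "\<dots> \<le> 1/4 + 1/4"
      proof (rule add_mono)
        show "cmod (v $ k) \<le> 1/4" using vbound[OF k] M4 by simp
        have "cmod (((p + v) - xt) $ k) \<le> vnorm ((p + v) - xt)"
          by (rule component_le) (use k xtc in simp)
        then show "cmod (((p + v) - xt) $ k) \<le> 1/4" using close by simp
      qed
      finally have "xt $ k - p $ k = 0" using g gint_small by force
      then show "xt $ k = p $ k" by simp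
    qed
    have "mat_adjoint Ui *\<^sub>v p = (mat_adjoint Ui * mat_adjoint U) *\<^sub>v x"
      unfolding p_def by (rule assoc_mult_mat_vec[OF adjUi adjU xc, symmetric])
    also have "mat_adjoint Ui * mat_adjoint U = 1\<^sub>m M"
      using adj_mult[OF Uc Uic] UUi by simp
    finally show "mat_adjoint (minv U) *\<^sub>v xt = x" using xtp xc unfolding Ui_def by simp
  qed
qed

end
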